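(* Let $\Omega\subset\mathbb{R}^d$ be open and connected, $m\ge1$, $p\colon\Omega\to[1,2]$ measurable, $X=L^2(\Omega,\mathbb{R}^m)$, $\rho_p(f)=\int_\Omega|f(x)|^{p(x)}\,dx$, and $\tau>0$. Then for every $f\in X$, $$M_\tau(\rho_p)(f)=\int_\Omega T_\tau\big(f(x),p(x)\big)\,dx,$$ where for $z\in\mathbb{R}^m$, $q\in[1,2]$, $$T_\tau(z,q)=\begin{cases}\frac{|z|^2}{2\tau}, & q=1,\ |z|\le\tau,\\ |z|-\frac{\tau}{2}, & q=1,\ |z|\ge\tau,\\ \frac{|z|^2}{1+2\tau}, & q=2,\\ (|z|-\bar\alpha)\,\frac{2\bar\alpha+q(|z|-\bar\alpha)}{2\tau q}, & 1<q<2.\end{cases}$$ Here $\bar\alpha=\bar\alpha(|z|,q,\tau)$ is the unique solution $\alpha\in[0,|z|)$ of $\alpha+\tau q\,\alpha^{q-1}=|z|$ when $z\neq0$, and $\bar\alpha=0$ when $z=0$.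
   Context: $|\cdot|$ is the Euclidean norm on $\mathbb{R}^m$ and $\|\cdot\|_2$ the norm of $X$. The Moreau envelope is $M_\tau(\rho_p)(f)=\inf_{g\in X}\big[\rho_p(g)+\frac{1}{2\tau}\|f-g\|_2^2\big]$. *)

theory Defs
  imports "HOL-Analysis.Analysis"
begin

text \<open>The space X = L^2(Omega, R^m), represented by (Lebesgue-)measurable functions
  with square-integrable norm on Omega (values outside Omega are irrelevant).\<close>
definition L2_space :: "'a::euclidean_space set \<Rightarrow> ('a \<Rightarrow> 'b::euclidean_space) set" where
  "L2_space \<Omega> = {f. f \<in> borel_measurable (lebesgue_on \<Omega>) \<and>
                      integrable (lebesgue_on \<Omega>) (\<lambda>x. (norm (f x))\<^sup>2)}"

definition L2_norm :: "'a::euclidean_space set \<Rightarrow> ('a \<Rightarrow> 'b::euclidean_space) \<Rightarrow> real" where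
  "L2_norm \<Omega> h = sqrt (integral\<^sup>L (lebesgue_on \<Omega>) (\<lambda>x. (norm (h x))\<^sup>2))"

definition rho_p :: "'a::euclidean_space set \<Rightarrow> ('a \<Rightarrow> real) \<Rightarrow> ('a \<Rightarrow> 'b::euclidean_space) \<Rightarrow> ennreal" where
  "rho_p \<Omega> p g = (\<integral>\<^sup>+ x. ennreal (norm (g x) powr p x) \<partial>lebesgue_on \<Omega>)"

definition moreau_env :: "real \<Rightarrow> (('a \<Rightarrow> 'b::real_normed_vector) \<Rightarrow> ennreal) \<Rightarrow> ('a \<Rightarrow> 'b) set
      \<Rightarrow> (('a \<Rightarrow> 'b) \<Rightarrow> real) \<Rightarrow> ('a \<Rightarrow> 'b) \<Rightarrow> ennreal" where
  "moreau_env \<tau> F X nrm f = (INF g\<in>X. F g + ennreal (1 / (2 * \<tau>) * (nrm (\<lambda>x. f x - g x))\<^sup>2))"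

definition alpha_bar :: "real \<Rightarrow> real \<Rightarrow> real \<Rightarrow> real" where
  "alpha_bar r q \<tau> = (if r = 0 then 0 else
      (THE \<alpha>. 0 \<le> \<alpha> \<and> \<alpha> < r \<and> \<alpha> + \<tau> * q * \<alpha> powr (q - 1) = r))"

definition T_fun :: "real \<Rightarrow> real \<Rightarrow> real \<Rightarrow> real" where
  "T_fun \<tau> r q =
     (if q = 1 then (if r \<le> \<tau> then r\<^sup>2 / (2 * \<tau>) else r - \<tau> / 2)
      else if q = 2 then r\<^sup>2 / (1 + 2 * \<tau>)
      else (let a = alpha_bar r q \<tau> in (r - a) * (2 * a + q * (r - a)) / (2 * \<tau> * q)))"

end

theory Submission imports Defs begin

lemma tangent:
  fixes a s q :: real
  assumes "0<a" "0\<le>s" "1\<le>q"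
  shows "a powr q + q * a powr (q-1) * (s - a) \<le> s powr q"
proof (cases "s = 0")
  case True
  have "a powr q = a * a powr (q-1)" using assms powr_mult_base[of a "q-1"] by simp
  hence "a powr q + q * a powr (q-1) * (s - a) = (1-q) * a powr q" using True by (simp add: algebra_simps)
  also have "\<dots> \<le> 0" using assms by (simp add: mult_nonpos_nonneg)
  finally show ?thesis using True by simp
next
  case False
  have "s powr q - a powr q \<ge> (q * a powr (q-1)) * (s - a)"
    apply (rule convex_on_imp_above_tangent[where A="{0<..}"])
    using assms False powr_convex[of q] has_real_derivative_powr[of a q]
    by (auto simp: has_field_derivative_at_within interior_open)
  thus ?thesis by simp
qed

lemma phi_min:
  fixes a s q r \<tau> :: real
  assumes "0<a" "1\<le>q" "\<tau>>0" "a + \<tau>*q*a powr (q-1) = r" "0\<le>s"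
  shows "a powr q + (r-a)^2/(2*\<tau>) \<le> s powr q + (r-s)^2/(2*\<tau>)"
proof -
  define K where "K = a powr (q-1)"
  have t: "a powr q + q * K * (s - a) \<le> s powr q" using tangent[OF assms(1,5,2)] K_def by simp
  have qK: "q*K = (r-a)/\<tau>" using assms(3,4) K_def by (simp add: field_simps)
  have e: "(r-s)^2 - (r-a)^2 = (s-a)^2 - 2*(r-a)*(s-a)"
    by (simp add: algebra_simps power2_eq_square)
  have "(r-s)^2/(2*\<tau>) - (r-a)^2/(2*\<tau>) = ((s-a)^2 - 2*(r-a)*(s-a))/(2*\<tau>)"
    by (simp add: diff_divide_distrib[symmetric] e)
  also have "\<dots> = (s-a)^2/(2*\<tau>) - 2*(r-a)*(s-a)/(2*\<tau>)" by (simp add: diff_divide_distrib)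
  also have "2*(r-a)*(s-a)/(2*\<tau>) = q*K*(s-a)" unfolding qK using assms(3) by (simp add: field_simps)
  finally have "(r-s)^2/(2*\<tau>) - (r-a)^2/(2*\<tau>) = (s-a)^2/(2*\<tau>) - q*K*(s-a)" .
  hence "(r-s)^2/(2*\<tau>) - (r-a)^2/(2*\<tau>) \<ge> - q*K*(s-a)" using assms(3) by simp
  thus ?thesis using t by (simp add: algebra_simps)
qed

definition Pa :: "real \<Rightarrow> real \<Rightarrow> real \<Rightarrow> real \<Rightarrow> bool" where
  "Pa \<tau> r q a \<longleftrightarrow> 0 \<le> a \<and> a \<le> r \<and> (\<forall>c>0. c \<le> a \<longleftrightarrow> c + \<tau>*q*c powr (q-1) \<le> r)
     \<and> T_fun \<tau> r q = a powr q + (r-a)^2/(2*\<tau>)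
     \<and> (\<forall>s\<ge>0. a powr q + (r-a)^2/(2*\<tau>) \<le> s powr q + (r-s)^2/(2*\<tau>))"

lemma Pa_q1:
  assumes "0 \<le> r" "\<tau> > 0"
  shows "\<exists>a. Pa \<tau> r 1 a"
proof (cases "r \<le> \<tau>")
  case True
  have m: "r^2/(2*\<tau>) \<le> s + (r-s)^2/(2*\<tau>)" if "s \<ge> 0" for s
  proof -
    have "0 \<le> s*(1 - r/\<tau>) + s^2/(2*\<tau>)" using True assms that
      by (intro add_nonneg_nonneg mult_nonneg_nonneg) auto
    also have "\<dots> = s + (r-s)^2/(2*\<tau>) - r^2/(2*\<tau>)" using assms
      by (simp add: field_simps power2_eq_square)
    finally show ?thesis by simp
  qed
  show ?thesis
    apply (rule exI[of _ 0])
    using True assms m by (auto simp: Pa_def T_fun_def powr_one)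
next
  case False
  have m: "\<forall>s\<ge>0. (r-\<tau>) powr 1 + (r-(r-\<tau>))^2/(2*\<tau>) \<le> s powr 1 + (r-s)^2/(2*\<tau>)"
    using phi_min[of "r-\<tau>" 1 \<tau> r] False assms by auto
  have "r - \<tau> / 2 = (r-\<tau>) + (r-(r-\<tau>))^2/(2*\<tau>)" using assms
    by (simp add: field_simps power2_eq_square)
  then show ?thesis
    apply (intro exI[of _ "r-\<tau>"])
    using False assms m unfolding Pa_def T_fun_def by (auto simp: powr_one)
qed

lemma Pa_q2:
  assumes "0 \<le> r" "\<tau> > 0"
  shows "\<exists>a. Pa \<tau> r 2 a"
proof (cases "r = 0")
  case True
  show ?thesis
    apply (rule exI[of _ 0])
    using True assms by (auto simp: Pa_def T_fun_def) (smt (verit, best) mult_pos_pos)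
next
  case False
  define a where "a = r/(1+2*\<tau>)"
  have a0: "a > 0" using False assms a_def by auto
  have p1: "a powr (2-1) = a" using a0 by simp
  have "a*(1+2*\<tau>) = r" unfolding a_def using assms by simp
  hence ha: "a + \<tau>*2*a powr (2-1) = r" unfolding p1 by (simp add: algebra_simps)
  have m: "\<forall>s\<ge>0. a powr 2 + (r-a)^2/(2*\<tau>) \<le> s powr 2 + (r-s)^2/(2*\<tau>)"
    using phi_min[of a 2 \<tau> r] ha a0 assms by auto
  have ra: "r - a = 2*\<tau>*a" using \<open>a*(1+2*\<tau>) = r\<close> by (simp add: algebra_simps)
  have "a^2 + (r-a)^2/(2*\<tau>) = a^2*(1+2*\<tau>)" unfolding ra using assms
    by (simp add: field_simps power2_eq_square)
  also have "\<dots> = (a*(1+2*\<tau>))^2/(1+2*\<tau>)" using assms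
    by (simp add: power2_eq_square)
  also have "\<dots> = r^2/(1+2*\<tau>)" using \<open>a*(1+2*\<tau>) = r\<close> by simp
  finally have T: "r^2/(1+2*\<tau>) = a^2 + (r-a)^2/(2*\<tau>)" by simp
  have c: "c \<le> a \<longleftrightarrow> c + \<tau>*2*c powr (2-1) \<le> r" if "c > 0" for c
  proof -
    have "c + \<tau>*2*c powr (2-1) = c*(1+2*\<tau>)" using that by (simp add: algebra_simps)
    thus ?thesis unfolding a_def using assms by (simp add: pos_le_divide_eq)
  qed
  have ar: "a \<le> r" unfolding a_def using assms by (simp add: field_simps)
  show ?thesis
    apply (rule exI[of _ a])
    unfolding Pa_def T_fun_def using a0 ar T c m by auto
qed

lemma Pa_qmid:
  assumes "0 \<le> r" "\<tau> > 0" "1 < q" "q < 2"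
  shows "\<exists>a. Pa \<tau> r q a"
proof (cases "r = 0")
  case True
  have c: "\<not> c + \<tau>*q*c powr (q-1) \<le> 0" if "c > 0" for c
  proof -
    have "\<tau>*q*c powr (q-1) \<ge> 0" using assms that by simp
    thus ?thesis using that by linarith
  qed
  show ?thesis
    apply (rule exI[of _ 0])
  proof -
    have T: "T_fun \<tau> r q = 0" unfolding T_fun_def alpha_bar_def using True assms by (simp add: Let_def)
    have cc: "\<forall>c>0. (c \<le> 0) = (c + \<tau> * q * c powr (q - 1) \<le> r)" using c True by force
    have m: "\<forall>s\<ge>0. (0::real) \<le> s powr q + (r - s)\<^sup>2 / (2 * \<tau>)" using assms by simp
    show "Pa \<tau> r q 0" unfolding Pa_def using T cc m True by simp
  qed
next
  case False
  hence r0: "r > 0" using assms by simp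
  define h where "h = (\<lambda>a::real. a + \<tau>*q*a powr (q-1))"
  have mono: "h x < h y" if "0 \<le> x" "x < y" for x y
  proof -
    have "x powr (q-1) \<le> y powr (q-1)" using that assms by (intro powr_mono2) auto
    hence "\<tau>*q*x powr (q-1) \<le> \<tau>*q*y powr (q-1)" using assms by simp
    thus ?thesis unfolding h_def using that by simp
  qed
  have cont: "continuous_on {0..r} h" unfolding h_def using assms
    by (intro continuous_on_add continuous_on_mult continuous_on_const continuous_on_id continuous_on_powr') auto
  have h0: "h 0 = 0" unfolding h_def by simp
  have hr: "h r > r" unfolding h_def using r0 assms by simp
  obtain a where a: "0 \<le> a" "a \<le> r" "h a = r"
    using IVT'[of h 0 r r] cont h0 hr r0 by auto
  have a0: "a > 0" using a h0 r0 by (cases "a = 0") auto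
  have ar: "a < r" using a hr by (cases "a = r") auto
  have uniq: "b = a" if "0 \<le> b" "h b = r" for b
  proof (rule ccontr)
    assume "b \<noteq> a"
    hence "b < a \<or> a < b" by auto
    thus False
    proof
      assume "b < a" thus False using mono[OF that(1)] that(2) a(3) by fastforce
    next
      assume "a < b" thus False using mono[OF a(1)] that(2) a(3) by fastforce
    qed
  qed
  have ab: "alpha_bar r q \<tau> = a"
    unfolding alpha_bar_def using False
    apply simp
    apply (rule the_equality)
    using a ar uniq unfolding h_def by blast+
  define K where "K = a powr (q-1)"
  have tK: "\<tau>*q*K = r - a" using a(3) unfolding h_def K_def by simp
  have aq: "a powr q = a * K" unfolding K_def using powr_mult_base[of a "q-1"] a0 by simp
  have T: "T_fun \<tau> r q = a powr q + (r-a)^2/(2*\<tau>)"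
  proof -
    have "T_fun \<tau> r q = (r - a) * (2 * a + q * (r - a)) / (2 * \<tau> * q)"
      unfolding T_fun_def using assms ab by (simp add: Let_def)
    also have "\<dots> = a * ((r-a)/(\<tau>*q)) + (r-a)^2/(2*\<tau>)"
      using assms by (simp add: field_simps power2_eq_square)
    also have "(r-a)/(\<tau>*q) = K" using tK assms by (simp add: field_simps)
    finally show ?thesis using aq by simp
  qed
  have c: "c \<le> a \<longleftrightarrow> c + \<tau>*q*c powr (q-1) \<le> r" if "c > 0" for c
  proof -
    have "c \<le> a \<longleftrightarrow> h c \<le> h a"
      using mono[of c a] mono[of a c] that a0 by (cases c a rule: linorder_cases) auto
    thus ?thesis unfolding a(3) unfolding h_def by simp
  qed
  have m: "\<forall>s\<ge>0. a powr q + (r-a)^2/(2*\<tau>) \<le> s powr q + (r-s)^2/(2*\<tau>)"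
    using phi_min[of a q \<tau> r] a0 assms a(3) unfolding h_def by auto
  show ?thesis
    apply (rule exI[of _ a])
    unfolding Pa_def using a0 ar T c m by auto
qed

lemma Pa_ex:
  assumes "0 \<le> r" "\<tau> > 0" "1 \<le> q" "q \<le> 2"
  shows "\<exists>a. Pa \<tau> r q a"
  using Pa_q1[OF assms(1,2)] Pa_q2[OF assms(1,2)] Pa_qmid[OF assms(1,2)] assms(3,4)
  by (cases "q = 1"; cases "q = 2") auto

lemma obj_eq:
  fixes \<Omega> :: "'a::euclidean_space set" and f g :: "'a \<Rightarrow> 'b::euclidean_space"
  assumes pm: "p \<in> borel_measurable (lebesgue_on \<Omega>)" and tau: "\<tau> > 0"
    and f: "f \<in> L2_space \<Omega>" and g: "g \<in> L2_space \<Omega>"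
  shows "rho_p \<Omega> p g + ennreal (1 / (2 * \<tau>) * (L2_norm \<Omega> (\<lambda>x. f x - g x))\<^sup>2)
     = (\<integral>\<^sup>+ x. ennreal (norm (g x) powr p x + (norm (f x - g x))\<^sup>2 / (2*\<tau>)) \<partial>lebesgue_on \<Omega>)"
proof -
  let ?M = "lebesgue_on \<Omega>"
  have [measurable]: "f \<in> borel_measurable ?M" "g \<in> borel_measurable ?M"
    and fi: "integrable ?M (\<lambda>x. (norm (f x))\<^sup>2)" and gi: "integrable ?M (\<lambda>x. (norm (g x))\<^sup>2)"
    using f g unfolding L2_space_def by auto
  have [measurable]: "p \<in> borel_measurable ?M" using pm .
  have bnd: "(norm (f x - g x))\<^sup>2 \<le> 2 * (norm (f x))\<^sup>2 + 2 * (norm (g x))\<^sup>2" for x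
  proof -
    have "norm (f x - g x) \<le> norm (f x) + norm (g x)" by (rule norm_triangle_ineq4)
    hence "(norm (f x - g x))\<^sup>2 \<le> (norm (f x) + norm (g x))\<^sup>2" by (intro power_mono) auto
    also have "\<dots> \<le> 2 * (norm (f x))\<^sup>2 + 2 * (norm (g x))\<^sup>2"
    proof -
      have "0 \<le> (norm (f x) - norm (g x))\<^sup>2" by simp
      thus ?thesis unfolding power2_diff power2_sum by linarith
    qed
    finally show ?thesis .
  qed
  have di: "integrable ?M (\<lambda>x. (norm (f x - g x))\<^sup>2)"
    apply (rule Bochner_Integration.integrable_bound[where f="\<lambda>x. 2 * (norm (f x))\<^sup>2 + 2 * (norm (g x))\<^sup>2"])
    subgoal by (intro Bochner_Integration.integrable_add integrable_mult_right fi gi)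
    subgoal by measurable
    subgoal using bnd by (intro AE_I2) (simp add: abs_le_iff)
    done
  have di2: "integrable ?M (\<lambda>x. (norm (f x - g x))\<^sup>2 / (2*\<tau>))"
    using di by simp
  have nn: "0 \<le> integral\<^sup>L ?M (\<lambda>x. (norm (f x - g x))\<^sup>2)" by (rule integral_nonneg_AE) auto
  have "1 / (2 * \<tau>) * (L2_norm \<Omega> (\<lambda>x. f x - g x))\<^sup>2
        = integral\<^sup>L ?M (\<lambda>x. (norm (f x - g x))\<^sup>2 / (2*\<tau>))"
    unfolding L2_norm_def using nn by simp
  hence e1: "ennreal (1 / (2 * \<tau>) * (L2_norm \<Omega> (\<lambda>x. f x - g x))\<^sup>2)
        = (\<integral>\<^sup>+ x. ennreal ((norm (f x - g x))\<^sup>2 / (2*\<tau>)) \<partial>?M)"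
    using nn_integral_eq_integral[OF di2] tau by simp
  show ?thesis unfolding e1 rho_p_def
    by (subst nn_integral_add[symmetric]) (use tau in auto)
qed


theorem mainTheorem4:
  fixes \<Omega> :: "'a::euclidean_space set"
    and p :: "'a \<Rightarrow> real"
    and \<tau> :: real
    and f :: "'a \<Rightarrow> 'b::euclidean_space"
  assumes "open \<Omega>" and "connected \<Omega>"
    and "p \<in> borel_measurable (lebesgue_on \<Omega>)"
    and "\<And>x. x \<in> \<Omega> \<Longrightarrow> 1 \<le> p x \<and> p x \<le> 2"
    and "\<tau> > 0"
    and "f \<in> L2_space \<Omega>"
  shows "moreau_env \<tau> (rho_p \<Omega> p) (L2_space \<Omega>) (L2_norm \<Omega>) f
           = (\<integral>\<^sup>+ x. ennreal (T_fun \<tau> (norm (f x)) (p x)) \<partial>lebesgue_on \<Omega>)"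
proof -
  let ?M = "lebesgue_on \<Omega>"
  note pm = assms(3) and pb = assms(4) and tau = assms(5) and fL = assms(6)
  have [measurable]: "f \<in> borel_measurable ?M" and fi: "integrable ?M (\<lambda>x. (norm (f x))\<^sup>2)"
    using fL unfolding L2_space_def by auto
  have [measurable]: "p \<in> borel_measurable ?M" using pm .
  define A where "A x = (SOME a. Pa \<tau> (norm (f x)) (p x) a)" for x
  have PA: "Pa \<tau> (norm (f x)) (p x) (A x)" if "x \<in> \<Omega>" for x
    unfolding A_def by (rule someI_ex, rule Pa_ex) (use pb[OF that] tau in auto)
  have Am: "A \<in> borel_measurable ?M"
    unfolding borel_measurable_iff_ge
  proof
    fix c :: real
    show "{w \<in> space ?M. c \<le> A w} \<in> sets ?M"
    proof (cases "c > 0")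
      case False
      have "{w \<in> space ?M. c \<le> A w} = space ?M"
        using PA False unfolding Pa_def by force
      thus ?thesis by simp
    next
      case True
      have "{w \<in> space ?M. c \<le> A w} = {w \<in> space ?M. c + \<tau>*p w*c powr (p w-1) \<le> norm (f w)}"
        using PA True unfolding Pa_def by auto
      also have "\<dots> \<in> sets ?M" by measurable
      finally show ?thesis .
    qed
  qed
  note Am[measurable]
  define g where "g x = (A x / norm (f x)) *\<^sub>R f x" for x
  have gm[measurable]: "g \<in> borel_measurable ?M" unfolding g_def by measurable
  have gn: "norm (g x) = A x \<and> norm (f x - g x) = norm (f x) - A x" if "x \<in> \<Omega>" for x
  proof (cases "f x = 0")
    case True
    thus ?thesis using PA[OF that] unfolding Pa_def g_def by auto
  next
    case False
    have a: "0 \<le> A x" "A x \<le> norm (f x)" using PA[OF that] unfolding Pa_def by auto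
    have e: "f x - g x = (1 - A x / norm (f x)) *\<^sub>R f x" unfolding g_def by (simp add: algebra_simps)
    have nn: "0 \<le> 1 - A x / norm (f x)" using a False by (simp add: field_simps)
    have "norm (f x - g x) = (1 - A x / norm (f x)) * norm (f x)" unfolding e using nn by simp
    also have "\<dots> = norm (f x) - A x" using False by (simp add: field_simps)
    finally have 1: "norm (f x - g x) = norm (f x) - A x" .
    have "norm (g x) = (A x / norm (f x)) * norm (f x)" unfolding g_def using a by simp
    also have "\<dots> = A x" using False by simp
    finally show ?thesis using 1 by simp
  qed
  have gL: "g \<in> L2_space \<Omega>"
    unfolding L2_space_def
  proof (intro CollectI conjI gm)
    show "integrable ?M (\<lambda>x. (norm (g x))\<^sup>2)"
      apply (rule Bochner_Integration.integrable_bound[OF fi])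
      subgoal by measurable
      subgoal
        apply (rule AE_I2)
        using gn PA unfolding Pa_def by (auto intro!: power_mono)
      done
  qed
  show ?thesis
  proof (rule antisym)
    show "moreau_env \<tau> (rho_p \<Omega> p) (L2_space \<Omega>) (L2_norm \<Omega>) f
           \<le> (\<integral>\<^sup>+ x. ennreal (T_fun \<tau> (norm (f x)) (p x)) \<partial>?M)"
      unfolding moreau_env_def
    proof (rule INF_lower2[OF gL])
      show "rho_p \<Omega> p g + ennreal (1 / (2 * \<tau>) * (L2_norm \<Omega> (\<lambda>x. f x - g x))\<^sup>2)
           \<le> (\<integral>\<^sup>+ x. ennreal (T_fun \<tau> (norm (f x)) (p x)) \<partial>?M)"
        unfolding obj_eq[OF pm tau fL gL]
        apply (rule nn_integral_mono)
        using gn PA unfolding Pa_def by (auto simp: space_restrict_space)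
    qed
  next
    show "(\<integral>\<^sup>+ x. ennreal (T_fun \<tau> (norm (f x)) (p x)) \<partial>?M)
          \<le> moreau_env \<tau> (rho_p \<Omega> p) (L2_space \<Omega>) (L2_norm \<Omega>) f"
      unfolding moreau_env_def
    proof (rule INF_greatest)
      fix h :: "'a \<Rightarrow> 'b" assume hL: "h \<in> L2_space \<Omega>"
      show "(\<integral>\<^sup>+ x. ennreal (T_fun \<tau> (norm (f x)) (p x)) \<partial>?M)
          \<le> rho_p \<Omega> p h + ennreal (1 / (2 * \<tau>) * (L2_norm \<Omega> (\<lambda>x. f x - h x))\<^sup>2)"
        unfolding obj_eq[OF pm tau fL hL]
      proof (rule nn_integral_mono, rule ennreal_leI)
        fix x assume "x \<in> space ?M"
        hence x: "x \<in> \<Omega>" by (simp add: space_restrict_space)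
        let ?r = "norm (f x)" and ?s = "norm (h x)"
        have "T_fun \<tau> ?r (p x) \<le> ?s powr p x + (?r - ?s)\<^sup>2/(2*\<tau>)"
          using PA[OF x] unfolding Pa_def by auto
        also have "(?r - ?s)\<^sup>2 \<le> (norm (f x - h x))\<^sup>2"
        proof -
          have "\<bar>?r - ?s\<bar> \<le> norm (f x - h x)" by (rule norm_triangle_ineq3)
          hence "\<bar>?r - ?s\<bar>\<^sup>2 \<le> (norm (f x - h x))\<^sup>2" by (intro power_mono) auto
          thus ?thesis by simp
        qed
        hence "?s powr p x + (?r - ?s)\<^sup>2/(2*\<tau>) \<le> ?s powr p x + (norm (f x - h x))\<^sup>2/(2*\<tau>)"
          using tau by (simp add: divide_right_mono)
        finally show "T_fun \<tau> ?r (p x) \<le> ?s powr p x + (norm (f x - h x))\<^sup>2/(2*\<tau>)" .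
      qed
    qed
  qed
qed

end
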